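(* Let $x_1,\dots,x_N\in S^2\times H$ be the points of a point cloud, represented by $f(x)=\frac{1}{N}\sum_{i=1}^N\delta(x-x_i)$, and let $\psi: S^2\times H\to\mathbb{R}$ satisfy $\psi(Z(\theta)x)=\psi(x)$ for all $x\in S^2\times H$ and all angles $\theta$. Define the sparse correlation at the point $x_j$ by $$[\psi\ast f](x_j)=\int_{S^2\times H}\psi(\mathcal{T}(x_j)^{-1}x)f(x)\,dx=\frac{1}{N}\sum_{i=1}^N\psi(\mathcal{T}(x_j)^{-1}x_i).$$ Then for every $Q\in SO(3)$ and every $j$, $[\psi\ast L_Qf](Qx_j)=[\psi\ast f](x_j)$, where $L_Qf(x)=f(Q^{-1}x)$ is the rotated point cloud $\frac1N\sum_i\delta(x-Qx_i)$; explicitly, $$\frac{1}{N}\sum_{i=1}^N\psi(\mathcal{T}(Qx_j)^{-1}Qx_i)=\frac{1}{N}\sum_{i=1}^N\psi(\mathcal{T}(x_j)^{-1}x_i).$$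
   Context: $Z(\theta)$, $Y(\theta)$ are the rotation matrices about the $z$- and $y$-axes by angle $\theta$; $n=(0,0,1)^T$; points of $S^2$ are $s(\alpha,\beta)=Z(\alpha)Y(\beta)n$ with $\alpha\in[0,2\pi]$, $\beta\in[0,\pi]$; $H=[0,1]$; a point of $S^2\times H$ is $(s,h)$ (direction and radial distance of a point of the unit ball). A rotation $Q\in SO(3)$ acts on $S^2\times H$ by $Q(s,h)=(Qs,h)$. The map $\mathcal{T}: S^2\times H\to SO(3)$ is $\mathcal{T}(s(\alpha,\beta),h)=Z(\alpha)Y(\beta)Z(2\pi h)$. $\delta$ is the Dirac delta. *)

theory Defs
  imports "HOL-Analysis.Analysis"
begin

definition Zrot :: "real \<Rightarrow> real^3^3" where
  "Zrot t = vector [vector [cos t, - sin t, 0], vector [sin t, cos t, 0], vector [0, 0, 1]]"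

definition Yrot :: "real \<Rightarrow> real^3^3" where
  "Yrot t = vector [vector [cos t, 0, sin t], vector [0, 1, 0], vector [- sin t, 0, cos t]]"

definition nvec :: "real^3" where
  "nvec = vector [0, 0, 1]"

definition sph :: "real \<Rightarrow> real \<Rightarrow> real^3" where
  "sph a b = Zrot a *v (Yrot b *v nvec)"

definition S2H :: "((real^3) \<times> real) set" where
  "S2H = {(s, h). norm s = 1 \<and> h \<in> {0..1}}"

definition SO3 :: "(real^3^3) set" where
  "SO3 = {Q. orthogonal_matrix Q \<and> det Q = 1}"

definition act :: "real^3^3 \<Rightarrow> (real^3) \<times> real \<Rightarrow> (real^3) \<times> real" where
  "act Q x = (Q *v fst x, snd x)"

text \<open>The map T(s(alpha,beta),h) = Z(alpha) Y(beta) Z(2 pi h); the spherical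
  coordinates (alpha,beta) of s are some chosen coordinates in the stated ranges.\<close>
definition Tmap :: "(real^3) \<times> real \<Rightarrow> real^3^3" where
  "Tmap x = (let (a, b) = (SOME (a, b). a \<in> {0..2*pi} \<and> b \<in> {0..pi} \<and> fst x = sph a b)
             in Zrot a ** Yrot b ** Zrot (2 * pi * snd x))"

definition sparse_corr :: "((real^3) \<times> real \<Rightarrow> real) \<Rightarrow> nat \<Rightarrow> (nat \<Rightarrow> (real^3) \<times> real) \<Rightarrow> (real^3) \<times> real \<Rightarrow> real" where
  "sparse_corr psi N xs y = (1 / real N) * (\<Sum>i<N. psi (act (matrix_inv (Tmap y)) (xs i)))"

end

theory Submission imports Defs begin

lemma minv_orth: fixes A :: "real^'n^'n" assumes "orthogonal_matrix A"
  shows "matrix_inv A = transpose A"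
proof -
  have ex: "\<exists>B::real^'n^'n. A ** B = mat 1 \<and> B ** A = mat 1"
    using assms by (auto simp: orthogonal_matrix_def)
  define B where "B = matrix_inv A"
  have "A ** B = mat 1" unfolding B_def matrix_inv_def using someI_ex[OF ex] by blast
  hence "transpose A ** (A ** B) = transpose A" by simp
  hence "(transpose A ** A) ** B = transpose A" by (simp add: matrix_mul_assoc)
  thus ?thesis using assms by (simp add: orthogonal_matrix_def B_def)
qed

lemma Zrot_orth: "orthogonal_matrix (Zrot t)" "det (Zrot t) = 1"
  by (auto simp: orthogonal_matrix_def Zrot_def vec_eq_iff forall_3 matrix_matrix_mult_def sum_3
      transpose_def mat_def det_3 power2_eq_square[symmetric])

lemma Yrot_orth: "orthogonal_matrix (Yrot t)" "det (Yrot t) = 1"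
  by (auto simp: orthogonal_matrix_def Yrot_def vec_eq_iff forall_3 matrix_matrix_mult_def sum_3
      transpose_def mat_def det_3 power2_eq_square[symmetric])

lemma Zn: "Zrot c *v nvec = nvec"
  by (simp add: Zrot_def nvec_def vec_eq_iff forall_3 matrix_vector_mult_def sum_3)

lemma prod_props:
  shows "orthogonal_matrix (Zrot a ** Yrot b ** Zrot c)" "det (Zrot a ** Yrot b ** Zrot c) = 1"
    "(Zrot a ** Yrot b ** Zrot c) *v nvec = sph a b"
  by (simp_all add: orthogonal_matrix_mul Zrot_orth Yrot_orth det_mul sph_def Zn matrix_vector_mul_assoc[symmetric])

lemma sph_exists: assumes "norm (s::real^3) = 1"
  shows "\<exists>a b. a \<in> {0..2*pi} \<and> b \<in> {0..pi} \<and> s = sph a b"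
proof -
  have n: "(s$1)^2 + (s$2)^2 + (s$3)^2 = 1"
    using assms by (simp add: norm_eq_1 inner_vec_def sum_3 power2_eq_square)
  hence "(s$3)^2 \<le> 1" using zero_le_power2[of "s$1"] zero_le_power2[of "s$2"] by linarith
  hence "\<bar>s$3\<bar> \<le> 1" by (simp add: abs_square_le_1)
  hence s3: "-1 \<le> s$3 \<and> s$3 \<le> 1" by (simp add: abs_le_iff)
  define b where "b = arccos (s$3)"
  have b: "b \<in> {0..pi}" "cos b = s$3" using s3 by (auto simp: b_def arccos_lbound arccos_ubound cos_arccos)
  have sb: "sin b = sqrt ((s$1)^2 + (s$2)^2)"
  proof -
    have "1 - (s$3)^2 = (s$1)^2 + (s$2)^2" using n by linarith
    thus ?thesis using s3 by (simp add: b_def sin_arccos)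
  qed
  show ?thesis
  proof (cases "(s$1)^2 + (s$2)^2 = 0")
    case True
    hence "s$1 = 0" "s$2 = 0" by (simp_all add: sum_power2_eq_zero_iff)
    with True sb b show ?thesis
      by (intro exI[of _ 0] exI[of _ b]) (auto simp: sph_def Zrot_def Yrot_def nvec_def vec_eq_iff forall_3 matrix_vector_mult_def sum_3)
  next
    case False
    define r where "r = sqrt ((s$1)^2 + (s$2)^2)"
    have "0 \<le> (s$1)^2 + (s$2)^2" by simp
    hence pos: "0 < (s$1)^2 + (s$2)^2" using False by linarith
    hence r: "r > 0" by (simp add: r_def)
    have "(s$1/r)^2 + (s$2/r)^2 = 1" using r False by (simp add: r_def power_divide add_divide_distrib[symmetric])
    then obtain a where a: "0 \<le> a" "a < 2*pi" "s$1/r = cos a" "s$2/r = sin a" by (rule sincos_total_2pi)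
    have "s$1 = cos a * sin b" "s$2 = sin a * sin b" using a(3,4) r sb unfolding r_def[symmetric] by (auto simp: field_simps)
    with a b show ?thesis
      by (intro exI[of _ a] exI[of _ b]) (auto simp: sph_def Zrot_def Yrot_def nvec_def vec_eq_iff forall_3 matrix_vector_mult_def sum_3)
  qed
qed

lemma Tmap_props: assumes "norm (fst x) = 1"
  shows "orthogonal_matrix (Tmap x)" "det (Tmap x) = 1" "Tmap x *v nvec = fst x"
proof -
  define P where "P = (\<lambda>(a, b). a \<in> {0..2*pi} \<and> b \<in> {0..pi} \<and> fst x = sph a b)"
  have ex: "\<exists>p. P p"
    using sph_exists[OF assms] unfolding P_def by auto
  obtain a b where ab: "(SOME p. P p) = (a, b)"
    by (metis surj_pair)
  have "P (a, b)" using someI_ex[OF ex] unfolding ab .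
  hence fx: "fst x = sph a b" unfolding P_def by simp
  have Tx: "Tmap x = Zrot a ** Yrot b ** Zrot (2 * pi * snd x)"
    using ab unfolding Tmap_def P_def by simp
  show "orthogonal_matrix (Tmap x)" unfolding Tx by (rule prod_props(1))
  show "det (Tmap x) = 1" unfolding Tx by (rule prod_props(2))
  show "Tmap x *v nvec = fst x" unfolding Tx fx by (rule prod_props(3))
qed

lemma fix_n: fixes R :: "real^3^3"
  assumes o: "orthogonal_matrix R" and d: "det R = 1" and f: "R *v nvec = nvec"
  shows "\<exists>t. R = Zrot t"
proof -
  have f3: "R$1$3 = 0" "R$2$3 = 0" "R$3$3 = 1"
    using f by (auto simp: nvec_def vec_eq_iff forall_3 matrix_vector_mult_def sum_3)
  have o1: "R ** transpose R = mat 1" "transpose R ** R = mat 1" using o by (auto simp: orthogonal_matrix_def)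
  have e: "\<And>i k. (\<Sum>j\<in>UNIV. R$i$j * R$k$j) = (if i = k then 1 else 0)"
    using o1(1) by (simp add: vec_eq_iff matrix_matrix_mult_def transpose_def mat_def)
  have e2: "\<And>i k. (\<Sum>j\<in>UNIV. R$j$i * R$j$k) = (if i = k then 1 else 0)"
    using o1(2) by (simp add: vec_eq_iff matrix_matrix_mult_def transpose_def mat_def)
  have "R$3$1^2 + R$3$2^2 + R$3$3^2 = 1" using e[of 3 3] by (simp add: sum_3 power2_eq_square)
  hence "R$3$1^2 + R$3$2^2 = 0" using f3 by simp
  hence r3: "R$3$1 = 0" "R$3$2 = 0" by (simp_all add: sum_power2_eq_zero_iff)
  have c1: "R$1$1^2 + R$2$1^2 = 1" using e2[of 1 1] r3 by (simp add: sum_3 power2_eq_square)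
  have c12: "R$1$1 * R$1$2 + R$2$1 * R$2$2 = 0" using e2[of 1 2] r3 by (simp add: sum_3)
  have dd: "R$1$1 * R$2$2 - R$1$2 * R$2$1 = 1" using d f3 r3 by (simp add: det_3)
  obtain t where t: "R$1$1 = cos t" "R$2$1 = sin t"
    using sincos_total_2pi[OF c1] by metis
  have "cos t * (R$1$1 * R$2$2 - R$1$2 * R$2$1) + sin t * (R$1$1 * R$1$2 + R$2$1 * R$2$2) = R$2$2 * ((sin t)^2 + (cos t)^2)"
    unfolding t power2_eq_square by algebra
  hence "R$2$2 = cos t * (R$1$1 * R$2$2 - R$1$2 * R$2$1) + sin t * (R$1$1 * R$1$2 + R$2$1 * R$2$2)"
    by simp
  hence r22: "R$2$2 = cos t" using dd c12 by simp
  have "- sin t * (R$1$1 * R$2$2 - R$1$2 * R$2$1) + cos t * (R$1$1 * R$1$2 + R$2$1 * R$2$2) = R$1$2 * ((sin t)^2 + (cos t)^2)"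
    unfolding t power2_eq_square by algebra
  hence "R$1$2 = - sin t * (R$1$1 * R$2$2 - R$1$2 * R$2$1) + cos t * (R$1$1 * R$1$2 + R$2$1 * R$2$2)"
    by simp
  hence r12: "R$1$2 = - sin t" using dd c12 by simp
  show ?thesis
    by (rule exI[of _ t]) (simp add: vec_eq_iff forall_3 Zrot_def f3 r3 t r22 r12)
qed

theorem theorem4:
  fixes N :: nat and xs :: "nat \<Rightarrow> (real^3) \<times> real" and psi :: "(real^3) \<times> real \<Rightarrow> real"
    and Q :: "real^3^3" and j :: nat
  assumes "\<forall>i<N. xs i \<in> S2H"
    and "\<forall>x\<in>S2H. \<forall>t. psi (act (Zrot t) x) = psi x"
    and "Q \<in> SO3"
    and "j < N"
  shows "sparse_corr psi N (\<lambda>i. act Q (xs i)) (act Q (xs j)) = sparse_corr psi N xs (xs j)"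
proof -
  have Qo: "orthogonal_matrix Q" "det Q = 1" using assms(3) by (auto simp: SO3_def)
  have nQ: "\<And>v. norm (Q *v v) = norm v"
    using Qo(1) orthogonal_transformation_matrix orthogonal_transformation_norm
    by (metis matrix_of_matrix_vector_mul matrix_vector_mul_linear)
  have nj: "norm (fst (xs j)) = 1" using assms(1,4) by (auto simp: S2H_def)
  hence nj': "norm (fst (act Q (xs j))) = 1" by (simp add: act_def nQ)
  define T where "T = Tmap (xs j)"
  define T' where "T' = Tmap (act Q (xs j))"
  note TP = Tmap_props[OF nj, folded T_def]
  note TP' = Tmap_props[OF nj', folded T'_def]
  define R where "R = transpose T' ** Q ** T"
  have Ro: "orthogonal_matrix R" using TP TP' Qo by (simp add: R_def orthogonal_matrix_mul)
  have Rd: "det R = 1" using TP TP' Qo by (simp add: R_def det_mul det_transpose)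
  have "R *v nvec = transpose T' *v (T' *v nvec)"
    using TP(3) TP'(3) by (simp add: R_def matrix_vector_mul_assoc[symmetric] act_def)
  also have "\<dots> = nvec" using TP'(1) by (simp add: matrix_vector_mul_assoc orthogonal_matrix_def)
  finally obtain t where t: "R = Zrot t" using fix_n[OF Ro Rd] by auto
  have key: "Zrot t ** transpose T = transpose T' ** Q"
  proof -
    have "T ** transpose T = mat 1" using TP(1) by (simp add: orthogonal_matrix_def)
    hence "transpose T' ** Q ** (T ** transpose T) = transpose T' ** Q" by simp
    thus ?thesis by (simp add: t[symmetric] R_def matrix_mul_assoc)
  qed
  have inv: "matrix_inv T = transpose T" "matrix_inv T' = transpose T'"
    using TP(1) TP'(1) by (auto simp: minv_orth)
  have "psi (act (transpose T') (act Q (xs i))) = psi (act (transpose T) (xs i))" if "i < N" for i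
  proof -
    have m: "act (transpose T) (xs i) \<in> S2H"
    proof -
      have "orthogonal_matrix (transpose T)" using TP(1) by simp
      hence "norm (transpose T *v v) = norm v" for v
        using orthogonal_transformation_matrix orthogonal_transformation_norm
        by (metis matrix_of_matrix_vector_mul matrix_vector_mul_linear)
      thus ?thesis using assms(1) that by (auto simp: S2H_def act_def)
    qed
    have "act (transpose T') (act Q (xs i)) = act (Zrot t) (act (transpose T) (xs i))"
    proof -
      have vv: "(transpose T') *v (Q *v v) = Zrot t *v (transpose T *v v)" for v
        by (simp only: matrix_vector_mul_assoc key)
      show ?thesis by (simp only: act_def prod.sel vv)
    qed
    thus ?thesis using assms(2) m by simp
  qed
  thus ?thesis unfolding sparse_corr_def T_def[symmetric] T'_def[symmetric] inv by simp
qed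

end
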